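(* Let $(X_n)_{n\ge0}$ be a Markov chain on $\mathbb Z_+$. Suppose there is an integer-valued random variable $\eta$ with $\mathbb E\eta>0$ such that for all $i\in\mathbb Z_+$ and $j\in\mathbb Z$, $\mathbb P\{\eta>j\}\le\mathbb P_i\{X_1-X_0>j\}$. Then there exists $\gamma>0$ such that $\sup_{i\in\mathbb Z_+}\mathbb E_ie^{\gamma\ell(i)}<\infty$.
   Context: $\mathbb P_i,\mathbb E_i$ denote probability and expectation given $X_0=i$; the local time at $i$ is $\ell(i):=\sum_{n=0}^\infty\mathbf 1\{X_n=i\}$. *)

theory Defs
  imports "HOL-Probability.Probability"
begin

text \<open>Canonical path space: a trajectory is a stream of states in Z_+ = nat;
  X_n(omega) = omega !! n.\<close>

definition markov_law :: "(nat \<Rightarrow> nat pmf) \<Rightarrow> nat \<Rightarrow> nat stream measure \<Rightarrow> bool" where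
  "markov_law p i M \<longleftrightarrow>
     prob_space M \<and> sets M = sets (stream_space (count_space UNIV)) \<and>
     (\<forall>xs. xs \<noteq> [] \<longrightarrow>
        emeasure M {\<omega> \<in> space M. stake (length xs) \<omega> = xs} =
        ennreal ((if hd xs = i then 1 else 0) *
                 (\<Prod>k<length xs - 1. pmf (p (xs ! k)) (xs ! Suc k))))"

definition local_time :: "nat \<Rightarrow> nat stream \<Rightarrow> ennreal" where
  "local_time i \<omega> = (\<Sum>n. if \<omega> !! n = i then 1 else 0)"

definition exp_ennreal :: "real \<Rightarrow> ennreal \<Rightarrow> ennreal" where
  "exp_ennreal \<gamma> x = (if x = \<top> then \<top> else ennreal (exp (\<gamma> * enn2real x)))"

end

theory Submission
  imports Defs
begin


primrec iid :: "int pmf \<Rightarrow> nat \<Rightarrow> int list pmf" where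
  "iid e 0 = return_pmf []"
| "iid e (Suc n) = bind_pmf e (\<lambda>x. map_pmf (\<lambda>xs. x # xs) (iid e n))"

lemma iid_snoc: "iid e (Suc n) = bind_pmf (iid e n) (\<lambda>ys. map_pmf (\<lambda>x. ys @ [x]) e)"
proof (induction n)
  case 0
  then show ?case by (simp add: bind_return_pmf map_pmf_def bind_return_pmf')
next
  case (Suc n)
  have "iid e (Suc (Suc n)) = bind_pmf e (\<lambda>x. map_pmf (\<lambda>xs. x # xs) (iid e (Suc n)))" by simp
  also have "\<dots> = bind_pmf e (\<lambda>x. map_pmf (\<lambda>xs. x # xs) (bind_pmf (iid e n) (\<lambda>ys. map_pmf (\<lambda>z. ys @ [z]) e)))"
    using Suc by simp
  also have "\<dots> = bind_pmf (iid e (Suc n)) (\<lambda>ys. map_pmf (\<lambda>x. ys @ [x]) e)"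
    by (simp add: map_pmf_def bind_assoc_pmf bind_return_pmf)
  finally show ?case .
qed

lemma iid_rev: "map_pmf rev (iid e n) = iid e n"
proof (induction n)
  case 0
  then show ?case by simp
next
  case (Suc n)
  have "map_pmf rev (iid e (Suc n)) = bind_pmf e (\<lambda>x. map_pmf (\<lambda>ys. ys @ [x]) (map_pmf rev (iid e n)))"
    by (simp add: map_bind_pmf pmf.map_comp o_def)
  also have "\<dots> = bind_pmf e (\<lambda>x. map_pmf (\<lambda>ys. ys @ [x]) (iid e n))" using Suc by simp
  also have "\<dots> = iid e (Suc n)"
    unfolding iid_snoc map_pmf_def by (subst bind_commute_pmf) simp
  finally show ?case .
qed

lemma set_iid: "xs \<in> set_pmf (iid e n) \<Longrightarrow> length xs = n \<and> set xs \<subseteq> set_pmf e"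
  by (induction n arbitrary: xs) fastforce+

fun posd :: "int \<Rightarrow> int list \<Rightarrow> bool" where
  "posd d [] = True"
| "posd d (x # xs) = (d + x > 0 \<and> posd (d + x) xs)"

fun sfx :: "int list \<Rightarrow> bool" where
  "sfx [] = True"
| "sfx (x # xs) = (x + sum_list xs > 0 \<and> sfx xs)"

fun Zm :: "int list \<Rightarrow> int" where
  "Zm [] = 0"
| "Zm (x # xs) = max 0 (x + Zm xs)"

lemma posd_snoc: "posd d (xs @ [y]) = (posd d xs \<and> d + sum_list xs + y > 0)"
  by (induction xs arbitrary: d) (auto simp: add.assoc)

lemma posd_rev: "posd 0 (rev xs) = sfx xs"
  by (induction xs) (auto simp: posd_snoc)

lemma Zm_snoc: "Zm (xs @ [y]) = max (Zm xs) (sum_list xs + y)"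
  by (induction xs) auto

lemma sum_le_Zm: "sum_list xs \<le> Zm xs"
  by (induction xs) auto

lemma Zm_nonneg: "0 \<le> Zm xs"
  by (cases xs) auto

lemma sfx_snoc: "sfx (xs @ [y]) = (sum_list xs + y > Zm xs)"
  by (induction xs) auto

lemma posd_mono: "posd d xs \<Longrightarrow> d \<le> d' \<Longrightarrow> posd d' xs"
  by (induction xs arbitrary: d d') auto

lemma Zm_bound: "set xs \<subseteq> {..L} \<Longrightarrow> 0 \<le> L \<Longrightarrow> Zm xs \<le> L * int (length xs)"
  by (induction xs) (auto simp: algebra_simps)

lemma Zm_step: "x \<le> L \<Longrightarrow> Zm (xs @ [x]) \<le> Zm xs + L * (if sfx (xs @ [x]) then 1 else 0)"
  using sum_le_Zm[of xs] by (auto simp: Zm_snoc sfx_snoc)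

lemma pos_ennreal_ineq:
  fixes x z :: int assumes "0 \<le> z"
  shows "ennreal (of_int z) + ennreal (of_int x) \<le> ennreal (of_int (max 0 (x + z))) + ennreal (of_int (- x))"
  unfolding ennreal_plus_if using assms by (intro ennreal_leI) auto

lemma walk_bound:
  assumes eL: "\<And>x. x \<in> set_pmf e \<Longrightarrow> x \<le> L" and L: "0 < L"
  shows "(\<integral>\<^sup>+x. ennreal (of_int x) \<partial>e) \<le>
           ennreal (of_int L) * emeasure (iid e (Suc n)) {xs. posd 0 xs} + (\<integral>\<^sup>+x. ennreal (of_int (-x)) \<partial>e)"
proof -
  define EZ where "EZ m = (\<integral>\<^sup>+xs. ennreal (of_int (Zm xs)) \<partial>iid e m)" for m
  have "EZ n \<le> (\<integral>\<^sup>+xs. ennreal (of_int (L * int n)) \<partial>iid e n)"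
    unfolding EZ_def
  proof (intro nn_integral_mono_AE)
    show "AE xs in measure_pmf (iid e n). ennreal (of_int (Zm xs)) \<le> ennreal (of_int (L * int n))"
      unfolding AE_measure_pmf_iff
    proof
      fix xs assume "xs \<in> set_pmf (iid e n)"
      then have "length xs = n" "set xs \<subseteq> {..L}" using set_iid[of xs e n] eL by auto
      then show "ennreal (of_int (Zm xs)) \<le> ennreal (of_int (L * int n))"
      proof (intro ennreal_leI)
        have "Zm xs \<le> L * int n" using Zm_bound[of xs L] L \<open>length xs = n\<close> \<open>set xs \<subseteq> {..L}\<close> by simp
        then show "real_of_int (Zm xs) \<le> real_of_int (L * int n)" by (simp only: of_int_le_iff)
      qed
    qed
  qed
  also have "\<dots> < \<top>" by (simp add: measure_pmf.emeasure_space_1)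
  finally have fin: "EZ n < \<top>" .
  have lower: "(\<integral>\<^sup>+x. ennreal (of_int x) \<partial>e) + EZ n \<le> EZ (Suc n) + (\<integral>\<^sup>+x. ennreal (of_int (-x)) \<partial>e)"
  proof -
    have "(\<integral>\<^sup>+x. ennreal (of_int x) \<partial>e) + EZ n = (\<integral>\<^sup>+x. ennreal (of_int x) + EZ n \<partial>e)"
      by (simp add: nn_integral_add measure_pmf.emeasure_space_1)
    also have "\<dots> \<le> (\<integral>\<^sup>+x. (\<integral>\<^sup>+xs. ennreal (of_int (Zm (x # xs))) \<partial>iid e n) + ennreal (of_int (-x)) \<partial>e)"
    proof (intro nn_integral_mono)
      fix x
      have "ennreal (of_int x) + EZ n = (\<integral>\<^sup>+xs. ennreal (of_int (Zm xs)) + ennreal (of_int x) \<partial>iid e n)"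
        unfolding EZ_def by (simp add: nn_integral_add measure_pmf.emeasure_space_1 add.commute)
      also have "\<dots> \<le> (\<integral>\<^sup>+xs. ennreal (of_int (Zm (x # xs))) + ennreal (of_int (-x)) \<partial>iid e n)"
        by (intro nn_integral_mono) (simp only: Zm.simps pos_ennreal_ineq Zm_nonneg)
      also have "\<dots> = (\<integral>\<^sup>+xs. ennreal (of_int (Zm (x # xs))) \<partial>iid e n) + ennreal (of_int (-x))"
        by (simp add: nn_integral_add measure_pmf.emeasure_space_1)
      finally show "ennreal (of_int x) + EZ n \<le> \<dots>" .
    qed
    also have "\<dots> = EZ (Suc n) + (\<integral>\<^sup>+x. ennreal (of_int (-x)) \<partial>e)"
      unfolding EZ_def by (simp add: nn_integral_add)
    finally show ?thesis .
  qed
  have upper: "EZ (Suc n) \<le> EZ n + ennreal (of_int L) * emeasure (iid e (Suc n)) {xs. sfx xs}"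
  proof -
    have "EZ (Suc n) = (\<integral>\<^sup>+ys. \<integral>\<^sup>+x. ennreal (of_int (Zm (ys @ [x]))) \<partial>e \<partial>iid e n)"
      unfolding EZ_def by (simp only: iid_snoc nn_integral_bind_pmf nn_integral_map_pmf)
    also have "\<dots> \<le> (\<integral>\<^sup>+ys. \<integral>\<^sup>+x. ennreal (of_int (Zm ys)) + ennreal (of_int L) * indicator {xs. sfx xs} (ys @ [x]) \<partial>e \<partial>iid e n)"
    proof (rule nn_integral_mono, rule nn_integral_mono_AE)
      fix ys
      show "AE x in measure_pmf e. ennreal (of_int (Zm (ys @ [x]))) \<le> ennreal (of_int (Zm ys)) + ennreal (of_int L) * indicator {xs. sfx xs} (ys @ [x])"
        unfolding AE_measure_pmf_iff
      proof
        fix x assume "x \<in> set_pmf e"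
        then have "Zm (ys @ [x]) \<le> Zm ys + L * (if sfx (ys @ [x]) then 1 else 0)"
          using Zm_step eL by blast
        note step = this
        show "ennreal (of_int (Zm (ys @ [x]))) \<le> ennreal (of_int (Zm ys)) + ennreal (of_int L) * indicator {xs. sfx xs} (ys @ [x])"
        proof (cases "sfx (ys @ [x])")
          case True
          have "ennreal (of_int (Zm (ys @ [x]))) \<le> ennreal (of_int (Zm ys) + of_int L)"
            using step True by (intro ennreal_leI) simp
          also have "\<dots> = ennreal (of_int (Zm ys)) + ennreal (of_int L)"
            using Zm_nonneg[of ys] L by (intro ennreal_plus) simp_all
          finally show ?thesis using True by (simp add: indicator_def)
        next
          case False
          have "ennreal (of_int (Zm (ys @ [x]))) \<le> ennreal (of_int (Zm ys))"
            using step False by (intro ennreal_leI) simp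
          then show ?thesis using False by (simp add: indicator_def)
        qed
      qed
    qed
    also have "\<dots> = (\<integral>\<^sup>+ys. ennreal (of_int (Zm ys)) + ennreal (of_int L) * emeasure e ((\<lambda>x. ys @ [x]) -` {xs. sfx xs}) \<partial>iid e n)"
    proof (rule nn_integral_cong)
      fix ys
      have "(\<integral>\<^sup>+x. ennreal (of_int (Zm ys)) + ennreal (of_int L) * indicator {xs. sfx xs} (ys @ [x]) \<partial>e)
          = (\<integral>\<^sup>+x. ennreal (of_int (Zm ys)) \<partial>e) + (\<integral>\<^sup>+x. ennreal (of_int L) * indicator ((\<lambda>x. ys @ [x]) -` {xs. sfx xs}) x \<partial>e)"
        by (subst nn_integral_add) (auto simp: indicator_def)
      also have "\<dots> = ennreal (of_int (Zm ys)) + ennreal (of_int L) * emeasure e ((\<lambda>x. ys @ [x]) -` {xs. sfx xs})"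
        by (simp add: nn_integral_cmult measure_pmf.emeasure_space_1)
      finally show "(\<integral>\<^sup>+x. ennreal (of_int (Zm ys)) + ennreal (of_int L) * indicator {xs. sfx xs} (ys @ [x]) \<partial>e)
          = ennreal (of_int (Zm ys)) + ennreal (of_int L) * emeasure e ((\<lambda>x. ys @ [x]) -` {xs. sfx xs})" .
    qed
    also have "\<dots> = EZ n + ennreal (of_int L) * (\<integral>\<^sup>+ys. emeasure e ((\<lambda>x. ys @ [x]) -` {xs. sfx xs}) \<partial>iid e n)"
      unfolding EZ_def by (subst nn_integral_add) (simp_all add: nn_integral_cmult)
    also have "(\<integral>\<^sup>+ys. emeasure e ((\<lambda>x. ys @ [x]) -` {xs. sfx xs}) \<partial>iid e n) = emeasure (iid e (Suc n)) {xs. sfx xs}"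
      by (simp only: iid_snoc emeasure_bind_pmf emeasure_map_pmf)
    finally show ?thesis by simp
  qed
  have rv: "emeasure (iid e (Suc n)) {xs. sfx xs} = emeasure (iid e (Suc n)) {xs. posd 0 xs}"
  proof -
    have "emeasure (iid e (Suc n)) {xs. posd 0 xs} = emeasure (map_pmf rev (iid e (Suc n))) {xs. posd 0 xs}"
      by (simp only: iid_rev)
    also have "\<dots> = emeasure (iid e (Suc n)) {xs. sfx xs}"
      by (simp add: posd_rev vimage_def)
    finally show ?thesis by simp
  qed
  have "(\<integral>\<^sup>+x. ennreal (of_int x) \<partial>e) + EZ n \<le>
     (EZ n + ennreal (of_int L) * emeasure (iid e (Suc n)) {xs. posd 0 xs}) + (\<integral>\<^sup>+x. ennreal (of_int (-x)) \<partial>e)"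
    using lower add_right_mono[OF upper[unfolded rv], of "\<integral>\<^sup>+x. ennreal (of_int (-x)) \<partial>e"]
    by (rule order_trans)
  then have "EZ n + (\<integral>\<^sup>+x. ennreal (of_int x) \<partial>e) \<le>
     EZ n + (ennreal (of_int L) * emeasure (iid e (Suc n)) {xs. posd 0 xs} + (\<integral>\<^sup>+x. ennreal (of_int (-x)) \<partial>e))"
    by (simp add: add_ac)
  then show ?thesis using fin unfolding ennreal_add_left_cancel_le by auto
qed



definition q :: "int pmf \<Rightarrow> nat \<Rightarrow> int \<Rightarrow> ennreal" where
  "q e n d = emeasure (iid e n) {xs. \<not> posd d xs}"

lemma q_Suc: "q e (Suc n) d = (\<integral>\<^sup>+x. (if d + x \<le> 0 then 1 else q e n (d + x)) \<partial>e)"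
proof -
  have "q e (Suc n) d = (\<integral>\<^sup>+x. emeasure (iid e n) ((\<lambda>xs. x # xs) -` {xs. \<not> posd d xs}) \<partial>e)"
    unfolding q_def by (simp only: iid.simps emeasure_bind_pmf emeasure_map_pmf)
  also have "\<dots> = (\<integral>\<^sup>+x. (if d + x \<le> 0 then 1 else q e n (d + x)) \<partial>e)"
  proof (rule nn_integral_cong)
    fix x
    show "emeasure (iid e n) ((\<lambda>xs. x # xs) -` {xs. \<not> posd d xs}) = (if d + x \<le> 0 then 1 else q e n (d + x))"
    proof (cases "d + x \<le> 0")
      case True
      then have "(\<lambda>xs. x # xs) -` {xs. \<not> posd d xs} = space (measure_pmf (iid e n))" by auto
      then show ?thesis using True by (simp add: measure_pmf.emeasure_space_1)
    next
      case False
      then have "(\<lambda>xs. x # xs) -` {xs. \<not> posd d xs} = {xs. \<not> posd (d + x) xs}" by auto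
      then show ?thesis using False by (simp add: q_def)
    qed
  qed
  finally show ?thesis .
qed

lemma q_le1: "q e n d \<le> 1"
  unfolding q_def by (rule measure_pmf.emeasure_le_1)

lemma q_anti: "d \<le> d' \<Longrightarrow> q e n d' \<le> q e n d"
  unfolding q_def by (intro emeasure_mono) (auto intro: posd_mono)

lemma q0_compl: "q e n 0 + emeasure (iid e n) {xs. posd 0 xs} = 1"
proof -
  have "q e n 0 + emeasure (iid e n) {xs. posd 0 xs} = emeasure (iid e n) ({xs. \<not> posd 0 xs} \<union> {xs. posd 0 xs})"
    unfolding q_def by (subst plus_emeasure) auto
  also have "{xs. \<not> posd 0 xs} \<union> {xs. posd 0 xs} = space (measure_pmf (iid e n))" by auto
  also have "emeasure (iid e n) \<dots> = 1" by (rule measure_pmf.emeasure_space_1)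
  finally show ?thesis .
qed

lemma dom_lemma:
  fixes P Q :: "int pmf" and \<phi> :: "int \<Rightarrow> ennreal"
  assumes tail: "\<And>j. measure_pmf.prob Q {z. z > j} \<le> measure_pmf.prob P {z. z > j}"
  shows "antimono \<phi> \<Longrightarrow> (\<forall>d\<le>a. \<phi> d = \<phi> a) \<Longrightarrow> (\<forall>d\<ge>a + int k. \<phi> d = \<phi> (a + int k)) \<Longrightarrow> \<phi> a < \<top>
     \<Longrightarrow> (\<integral>\<^sup>+z. \<phi> z \<partial>P) \<le> (\<integral>\<^sup>+z. \<phi> z \<partial>Q)"
proof (induction k arbitrary: \<phi> a)
  case 0
  then have "\<And>d. \<phi> d = \<phi> a" by (metis add.right_neutral linorder_le_cases of_nat_0)
  then have "(\<integral>\<^sup>+z. \<phi> z \<partial>R) = \<phi> a" for R :: "int pmf"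
  proof -
    fix R :: "int pmf"
    have "(\<integral>\<^sup>+z. \<phi> z \<partial>R) = (\<integral>\<^sup>+z. \<phi> a \<partial>R)"
      by (rule nn_integral_cong) (rule \<open>\<And>d. \<phi> d = \<phi> a\<close>)
    then show "(\<integral>\<^sup>+z. \<phi> z \<partial>R) = \<phi> a" by (simp add: measure_pmf.emeasure_space_1)
  qed
  then show ?case by simp
next
  case (Suc k)
  define \<phi>1 where "\<phi>1 d = \<phi> (max d (a + 1))" for d
  define \<Delta> where "\<Delta> = \<phi> a - \<phi> (a + 1)"
  have am: "antimono \<phi>1" using Suc.prems(1) unfolding \<phi>1_def antimono_def by auto
  have le: "\<phi> (a + 1) \<le> \<phi> a" using Suc.prems(1) unfolding antimono_def by auto
  have c1: "\<forall>d\<le>a + 1. \<phi>1 d = \<phi>1 (a + 1)" unfolding \<phi>1_def by auto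
  have c2: "\<forall>d\<ge>(a + 1) + int k. \<phi>1 d = \<phi>1 ((a + 1) + int k)"
  proof (intro allI impI)
    fix d assume d: "d \<ge> (a + 1) + int k"
    have m1: "max d (a + 1) = d" using d by simp
    have m2: "max ((a + 1) + int k) (a + 1) = a + int (Suc k)" by simp
    have "d \<ge> a + int (Suc k)" using d by simp
    then have "\<phi> d = \<phi> (a + int (Suc k))" using Suc.prems(3) by blast
    then show "\<phi>1 d = \<phi>1 ((a + 1) + int k)" unfolding \<phi>1_def m1 m2 .
  qed
  have fin: "\<phi>1 (a + 1) < \<top>" unfolding \<phi>1_def using le Suc.prems(4) by auto
  have IH: "(\<integral>\<^sup>+z. \<phi>1 z \<partial>P) \<le> (\<integral>\<^sup>+z. \<phi>1 z \<partial>Q)" using Suc.IH[OF am c1 c2 fin] .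
  have dec: "\<phi> d = \<phi>1 d + \<Delta> * indicator {..a} d" for d
  proof (cases "d \<le> a")
    case True
    then have E1: "\<phi> d = \<phi> a" using Suc.prems(2) by blast
    have E2: "\<phi>1 d + \<Delta> * indicator {..a} d = \<phi> (a + 1) + (\<phi> a - \<phi> (a + 1))"
      unfolding \<phi>1_def \<Delta>_def using True by (simp add: max_def)
    have E3: "\<phi> (a + 1) + (\<phi> a - \<phi> (a + 1)) = \<phi> a"
      using le by (simp only: add_diff_self_ennreal if_True)
    show ?thesis using E1 E2 E3 by metis
  next
    case False
    then have "max d (a + 1) = d" by simp
    then show ?thesis unfolding \<phi>1_def using False by simp
  qed
  have int: "(\<integral>\<^sup>+z. \<phi> z \<partial>R) = (\<integral>\<^sup>+z. \<phi>1 z \<partial>R) + \<Delta> * emeasure R {..a}" for R :: "int pmf"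
    by (simp add: dec nn_integral_add nn_integral_cmult)
  have "measure_pmf.prob P {..a} \<le> measure_pmf.prob Q {..a}"
  proof -
    have e: "{..a} = UNIV - {z. z > a}" by auto
    have c: "measure_pmf.prob R (UNIV - {z. z > a}) = 1 - measure_pmf.prob R {z. z > a}" for R :: "int pmf"
      using measure_pmf.prob_compl[of "{z. z > a}" R] by simp
    show ?thesis unfolding e c using tail[of a] by linarith
  qed
  then have "emeasure P {..a} \<le> emeasure Q {..a}"
    by (simp add: measure_pmf.emeasure_eq_measure)
  then show ?case unfolding int[of P] int[of Q] using IH by (intro add_mono mult_left_mono) auto
qed



primrec hh :: "(nat \<Rightarrow> nat pmf) \<Rightarrow> nat \<Rightarrow> nat \<Rightarrow> nat \<Rightarrow> ennreal" where
  "hh p i 0 x = 0"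
| "hh p i (Suc n) x = (\<integral>\<^sup>+y. (if y = i then 1 else hh p i n y) \<partial>p x)"

lemma hh_le1: "hh p i n x \<le> 1"
proof (induction n arbitrary: x)
  case 0 then show ?case by simp
next
  case (Suc n)
  have "hh p i (Suc n) x \<le> (\<integral>\<^sup>+y. 1 \<partial>p x)"
    unfolding hh.simps by (intro nn_integral_mono) (use Suc in auto)
  then show ?case by (simp add: measure_pmf.emeasure_space_1)
qed

lemma hh_le_q:
  assumes eL: "\<And>z. z \<in> set_pmf e \<Longrightarrow> z \<le> L"
    and tail: "\<And>x j. measure_pmf.prob e {z. z > j} \<le> measure_pmf.prob (p x) {y. int y - int x > j}"
  shows "hh p i n x \<le> q e n (int x - int i)"
proof (induction n arbitrary: x)
  case 0 then show ?case by simp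
next
  case (Suc n)
  define \<phi> where "\<phi> d = (if d \<le> 0 then 1 else q e n d)" for d
  have am: "antimono \<phi>"
  proof (rule antimonoI)
    fix d d' :: int assume "d \<le> d'"
    then show "\<phi> d' \<le> \<phi> d" unfolding \<phi>_def using q_le1[of e n] q_anti[of d d' e n] by auto
  qed
  define c where "c = int x - int i"
  have "hh p i (Suc n) x \<le> (\<integral>\<^sup>+y. \<phi> (int y - int i) \<partial>p x)"
    unfolding hh.simps
  proof (intro nn_integral_mono)
    fix y
    show "(if y = i then 1 else hh p i n y) \<le> \<phi> (int y - int i)"
    proof (cases "y \<le> i")
      case True
      then show ?thesis unfolding \<phi>_def using hh_le1[of p i n y] by auto
    next
      case False
      then show ?thesis unfolding \<phi>_def using Suc[of y] by auto
    qed
  qed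
  also have "\<dots> = (\<integral>\<^sup>+z. \<phi> (z + c) \<partial>map_pmf (\<lambda>y. int y - int x) (p x))"
    unfolding c_def by simp
  also have "\<dots> \<le> (\<integral>\<^sup>+z. \<phi> (min (z + c) (L + c)) \<partial>map_pmf (\<lambda>y. int y - int x) (p x))"
    by (intro nn_integral_mono) (use am in \<open>auto simp: antimono_def\<close>)
  also have "\<dots> \<le> (\<integral>\<^sup>+z. \<phi> (min (z + c) (L + c)) \<partial>e)"
  proof (rule dom_lemma[where a = "min (-c) L" and k = "nat (L - min (-c) L)"])
    show "measure_pmf.prob e {z. z > j} \<le> measure_pmf.prob (map_pmf (\<lambda>y. int y - int x) (p x)) {z. z > j}" for j
      using tail[of j x] by (simp add: vimage_def)
    show "antimono (\<lambda>z. \<phi> (min (z + c) (L + c)))"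
      using am by (auto simp: antimono_def)
    show "\<forall>d\<le>min (- c) L. \<phi> (min (d + c) (L + c)) = \<phi> (min (min (- c) L + c) (L + c))"
      unfolding \<phi>_def by auto
    show "\<forall>d\<ge>min (- c) L + int (nat (L - min (- c) L)). \<phi> (min (d + c) (L + c)) =
             \<phi> (min (min (- c) L + int (nat (L - min (- c) L)) + c) (L + c))"
      by auto
    show "\<phi> (min (min (- c) L + c) (L + c)) < \<top>"
      unfolding \<phi>_def using q_le1[of e n] by (auto simp: top_unique)
  qed
  also have "\<dots> = (\<integral>\<^sup>+z. (if c + z \<le> 0 then 1 else q e n (c + z)) \<partial>e)"
  proof (rule nn_integral_cong_AE)
    show "AE z in measure_pmf e. \<phi> (min (z + c) (L + c)) = (if c + z \<le> 0 then 1 else q e n (c + z))"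
      unfolding AE_measure_pmf_iff
    proof
      fix z assume "z \<in> set_pmf e"
      then have "min (z + c) (L + c) = c + z" using eL by auto
      then show "\<phi> (min (z + c) (L + c)) = (if c + z \<le> 0 then 1 else q e n (c + z))"
        unfolding \<phi>_def by simp
    qed
  qed
  also have "\<dots> = q e (Suc n) c" by (simp add: q_Suc)
  finally show ?case unfolding c_def .
qed



primrec FF :: "(nat \<Rightarrow> nat pmf) \<Rightarrow> nat \<Rightarrow> real \<Rightarrow> nat \<Rightarrow> nat \<Rightarrow> ennreal" where
  "FF p i g 0 x = 1"
| "FF p i g (Suc n) x = (\<integral>\<^sup>+y. (if y = i then ennreal (exp g) * FF p i g n i else FF p i g n y) \<partial>p x)"

lemma FF_ge1: "0 \<le> g \<Longrightarrow> 1 \<le> FF p i g n x"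
proof (induction n arbitrary: x)
  case 0 then show ?case by simp
next
  case (Suc n)
  have "(\<integral>\<^sup>+y. 1 \<partial>p x) \<le> FF p i g (Suc n) x"
    unfolding FF.simps
  proof (intro nn_integral_mono)
    fix y
    have "1 \<le> ennreal (exp g)" using Suc.prems by simp
    then have "1 \<le> ennreal (exp g) * FF p i g n i"
      using Suc.IH[of i] Suc.prems by (metis mult_mono' mult_1 zero_le_one)
    then show "1 \<le> (if y = i then ennreal (exp g) * FF p i g n i else FF p i g n y)"
      using Suc by auto
  qed
  then show ?case by (simp add: measure_pmf.emeasure_space_1)
qed

lemma FF_mono: "0 \<le> g \<Longrightarrow> FF p i g n x \<le> FF p i g (Suc n) x"
proof (induction n arbitrary: x)
  case 0
  then show ?case using FF_ge1[of g p i "Suc 0" x] by simp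
next
  case (Suc n)
  show ?case
    unfolding FF.simps(2)[of p i g "Suc n" x] FF.simps(2)[of p i g n x]
  proof (intro nn_integral_mono)
    fix y
    show "(if y = i then ennreal (exp g) * FF p i g n i else FF p i g n y)
          \<le> (if y = i then ennreal (exp g) * FF p i g (Suc n) i else FF p i g (Suc n) y)"
      using Suc by (auto intro: mult_left_mono)
  qed
qed

lemma FF_fin: "FF p i g n x \<le> ennreal (exp (\<bar>g\<bar> * real n))"
proof (induction n arbitrary: x)
  case 0 then show ?case by simp
next
  case (Suc n)
  have b: "ennreal (exp (\<bar>g\<bar> * real n)) \<le> ennreal (exp (\<bar>g\<bar> * real (Suc n)))"
    by (intro ennreal_leI) (simp add: mult_left_mono)
  have "ennreal (exp g) * ennreal (exp (\<bar>g\<bar> * real n)) = ennreal (exp (g + \<bar>g\<bar> * real n))"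
    by (simp add: ennreal_mult[symmetric] exp_add)
  also have "\<dots> \<le> ennreal (exp (\<bar>g\<bar> * real (Suc n)))"
    by (intro ennreal_leI) (simp add: algebra_simps)
  finally have a: "ennreal (exp g) * ennreal (exp (\<bar>g\<bar> * real n)) \<le> ennreal (exp (\<bar>g\<bar> * real (Suc n)))" .
  have "FF p i g (Suc n) x \<le> (\<integral>\<^sup>+y. ennreal (exp (\<bar>g\<bar> * real (Suc n))) \<partial>p x)"
    unfolding FF.simps
  proof (intro nn_integral_mono)
    fix y
    have "ennreal (exp g) * FF p i g n i \<le> ennreal (exp g) * ennreal (exp (\<bar>g\<bar> * real n))"
      using Suc[of i] by (intro mult_left_mono) auto
    then show "(if y = i then ennreal (exp g) * FF p i g n i else FF p i g n y) \<le> ennreal (exp (\<bar>g\<bar> * real (Suc n)))"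
      using a b Suc[of y] by (auto intro: order_trans)
  qed
  then show ?case by (simp add: measure_pmf.emeasure_space_1)
qed

lemma FF_key: "0 \<le> g \<Longrightarrow> FF p i g n x + hh p i n x \<le> 1 + hh p i n x * (ennreal (exp g) * FF p i g n i)"
proof (induction n arbitrary: x)
  case 0 then show ?case by simp
next
  case (Suc n)
  define K where "K = ennreal (exp g) * FF p i g (Suc n) i"
  have "FF p i g (Suc n) x + hh p i (Suc n) x =
        (\<integral>\<^sup>+y. (if y = i then ennreal (exp g) * FF p i g n i else FF p i g n y) + (if y = i then 1 else hh p i n y) \<partial>p x)"
    by (simp add: nn_integral_add)
  also have "\<dots> \<le> (\<integral>\<^sup>+y. 1 + (if y = i then 1 else hh p i n y) * K \<partial>p x)"
  proof (intro nn_integral_mono)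
    fix y
    have m: "ennreal (exp g) * FF p i g n i \<le> K"
      unfolding K_def using FF_mono[OF Suc.prems] by (intro mult_left_mono) auto
    show "(if y = i then ennreal (exp g) * FF p i g n i else FF p i g n y) + (if y = i then 1 else hh p i n y)
          \<le> 1 + (if y = i then 1 else hh p i n y) * K"
    proof (cases "y = i")
      case True
      then show ?thesis using m by (simp add: add.commute add_left_mono)
    next
      case False
      have "FF p i g n y + hh p i n y \<le> 1 + hh p i n y * (ennreal (exp g) * FF p i g n i)"
        using Suc.IH[OF Suc.prems] .
      also have "\<dots> \<le> 1 + hh p i n y * K"
        using m by (intro add_left_mono mult_left_mono) auto
      finally show ?thesis using False by simp
    qed
  qed
  also have "\<dots> = 1 + hh p i (Suc n) x * K"
    by (simp add: nn_integral_add nn_integral_multc measure_pmf.emeasure_space_1)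
  finally show ?case unfolding K_def .
qed



primrec cp :: "(nat \<Rightarrow> nat pmf) \<Rightarrow> nat \<Rightarrow> nat \<Rightarrow> nat list pmf" where
  "cp p x 0 = return_pmf [x]"
| "cp p x (Suc n) = map_pmf (\<lambda>ys. x # ys) (bind_pmf (p x) (\<lambda>y. cp p y n))"

lemma cp_set: "ys \<in> set_pmf (cp p x n) \<Longrightarrow> ys \<noteq> [] \<and> hd ys = x \<and> length ys = Suc n"
  by (induction n arbitrary: x ys) auto

lemma cp_pmf: "pmf (cp p x n) xs =
   (if length xs = Suc n \<and> hd xs = x then \<Prod>k<n. pmf (p (xs ! k)) (xs ! Suc k) else 0)"
proof (induction n arbitrary: x xs)
  case 0
  then show ?case by (cases xs) (auto simp: indicator_def)
next
  case (Suc n)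
  show ?case
  proof (cases xs)
    case Nil
    have "pmf (cp p x (Suc n)) [] = 0"
      by (auto simp: pmf_eq_0_set_pmf)
    then show ?thesis using Nil by simp
  next
    case (Cons x' ys)
    show ?thesis
    proof (cases "x' = x")
      case False
      have "pmf (cp p x (Suc n)) xs = 0"
        using False Cons by (auto simp: pmf_eq_0_set_pmf)
      then show ?thesis using False Cons by simp
    next
      case True
      have "pmf (cp p x (Suc n)) xs = pmf (bind_pmf (p x) (\<lambda>y. cp p y n)) ys"
        unfolding Cons True cp.simps by (rule pmf_map_inj') (simp add: inj_def)
      also have "ennreal \<dots> = (\<integral>\<^sup>+y. ennreal (pmf (cp p y n) ys) \<partial>p x)"
        by (rule ennreal_pmf_bind)
      also have "\<dots> = (\<integral>\<^sup>+y. ennreal (if length ys = Suc n then \<Prod>k<n. pmf (p (ys ! k)) (ys ! Suc k) else 0) * indicator {hd ys} y \<partial>p x)"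
        unfolding Suc.IH by (intro nn_integral_cong) (simp add: indicator_def)
      also have "\<dots> = ennreal (if length ys = Suc n then \<Prod>k<n. pmf (p (ys ! k)) (ys ! Suc k) else 0) * ennreal (pmf (p x) (hd ys))"
        by (simp add: emeasure_pmf_single)
      also have "\<dots> = ennreal (if length ys = Suc n then (\<Prod>k<Suc n. pmf (p (xs ! k)) (xs ! Suc k)) else 0)"
      proof (cases "length ys = Suc n")
        case True
        then have "hd ys = ys ! 0" by (cases ys) auto
        then have "(\<Prod>k<Suc n. pmf (p (xs ! k)) (xs ! Suc k)) = pmf (p x) (hd ys) * (\<Prod>k<n. pmf (p (ys ! k)) (ys ! Suc k))"
          unfolding Cons \<open>x' = x\<close> by (subst prod.lessThan_Suc_shift) simp
        note eqP = this
        have "ennreal (if length ys = Suc n then \<Prod>k<n. pmf (p (ys ! k)) (ys ! Suc k) else 0) * ennreal (pmf (p x) (hd ys))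
              = ennreal ((\<Prod>k<n. pmf (p (ys ! k)) (ys ! Suc k)) * pmf (p x) (hd ys))"
          using True by (simp add: ennreal_mult' prod_nonneg)
        then show ?thesis using True eqP by (simp add: mult.commute)
      qed simp
      finally have "pmf (cp p x (Suc n)) xs = (if length ys = Suc n then (\<Prod>k<Suc n. pmf (p (xs ! k)) (xs ! Suc k)) else 0)"
        by (subst (asm) ennreal_inj) (auto simp: prod_nonneg)
      then show ?thesis using Cons True by simp
    qed
  qed
qed

definition cnt :: "nat \<Rightarrow> nat list \<Rightarrow> nat" where
  "cnt i xs = length (filter (\<lambda>y. y = i) xs)"

lemma FF_cp: "(\<integral>\<^sup>+xs. ennreal (exp (g * real (cnt i (tl xs)))) \<partial>cp p x n) = FF p i g n x"
proof (induction n arbitrary: x)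
  case 0
  then show ?case by (simp add: cnt_def)
next
  case (Suc n)
  have "(\<integral>\<^sup>+xs. ennreal (exp (g * real (cnt i (tl xs)))) \<partial>cp p x (Suc n)) =
        (\<integral>\<^sup>+y. \<integral>\<^sup>+ys. ennreal (exp (g * real (cnt i ys))) \<partial>cp p y n \<partial>p x)"
    by simp
  also have "\<dots> = (\<integral>\<^sup>+y. (if y = i then ennreal (exp g) * FF p i g n i else FF p i g n y) \<partial>p x)"
  proof (rule nn_integral_cong)
    fix y
    have "(\<integral>\<^sup>+ys. ennreal (exp (g * real (cnt i ys))) \<partial>cp p y n) =
          (\<integral>\<^sup>+ys. ennreal (if y = i then exp g else 1) * ennreal (exp (g * real (cnt i (tl ys)))) \<partial>cp p y n)"
    proof (rule nn_integral_cong_AE)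
      show "AE ys in measure_pmf (cp p y n). ennreal (exp (g * real (cnt i ys))) =
             ennreal (if y = i then exp g else 1) * ennreal (exp (g * real (cnt i (tl ys))))"
        unfolding AE_measure_pmf_iff
      proof
        fix ys assume "ys \<in> set_pmf (cp p y n)"
        then obtain ys' where ys: "ys = y # ys'" using cp_set[of ys p y n] by (cases ys) auto
        have "cnt i ys = (if y = i then 1 else 0) + cnt i (tl ys)"
          unfolding cnt_def ys by simp
        then show "ennreal (exp (g * real (cnt i ys))) =
             ennreal (if y = i then exp g else 1) * ennreal (exp (g * real (cnt i (tl ys))))"
          by (simp add: ennreal_mult[symmetric] exp_add[symmetric] algebra_simps)
      qed
    qed
    also have "\<dots> = (if y = i then ennreal (exp g) * FF p i g n i else FF p i g n y)"
      by (simp add: nn_integral_cmult Suc.IH)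
    finally show "(\<integral>\<^sup>+ys. ennreal (exp (g * real (cnt i ys))) \<partial>cp p y n) =
       (if y = i then ennreal (exp g) * FF p i g n i else FF p i g n y)" .
  qed
  also have "\<dots> = FF p i g (Suc n) x" by simp
  finally show ?case .
qed

lemma markov_distr:
  assumes "markov_law p i M"
  shows "distr M (count_space UNIV) (stake (Suc n)) = measure_pmf (cp p i n)"
proof -
  have PS: "prob_space M" and S: "sets M = sets (stream_space (count_space UNIV))"
   and F: "\<And>xs. xs \<noteq> [] \<Longrightarrow> emeasure M {\<omega> \<in> space M. stake (length xs) \<omega> = xs} =
        ennreal ((if hd xs = i then 1 else 0) * (\<Prod>k<length xs - 1. pmf (p (xs ! k)) (xs ! Suc k)))"
    using assms unfolding markov_law_def by auto
  have meas: "stake (Suc n) \<in> M \<rightarrow>\<^sub>M count_space UNIV"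
    using measurable_stake[of "Suc n"] by (simp add: measurable_cong_sets[OF S refl])
  show ?thesis
  proof (rule measure_eqI_countable[where A = UNIV])
    fix xs :: "nat list"
    have "emeasure (distr M (count_space UNIV) (stake (Suc n))) {xs} = emeasure M {\<omega> \<in> space M. stake (Suc n) \<omega> = xs}"
      by (subst emeasure_distr[OF meas]) (auto intro!: arg_cong[where f = "emeasure M"])
    also have "\<dots> = emeasure (measure_pmf (cp p i n)) {xs}"
    proof (cases "length xs = Suc n")
      case True
      then have "xs \<noteq> []" by auto
      then show ?thesis using F[of xs] True
        by (simp add: emeasure_pmf_single cp_pmf)
    next
      case False
      then have "{\<omega> \<in> space M. stake (Suc n) \<omega> = xs} = {}" by (auto dest: arg_cong[where f=length])
      then show ?thesis using False by (simp only: emeasure_pmf_single cp_pmf emeasure_empty) simp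
    qed
    finally show "emeasure (distr M (count_space UNIV) (stake (Suc n))) {xs} = emeasure (measure_pmf (cp p i n)) {xs}" .
  qed auto
qed



lemma real_bound:
  fixes Fr Hr d c :: real
  assumes "Fr + Hr \<le> 1 + Hr * (c * Fr)" "Hr \<le> 1 - d" "0 \<le> Hr" "1 \<le> Fr" "0 < d" "c = 1 + d / 2"
  shows "Fr \<le> 2"
proof -
  have "1 \<le> c" using assms by simp
  have "1 * 1 \<le> c * Fr" by (rule mult_mono) (use assms \<open>1 \<le> c\<close> in auto)
  then have "c * Fr - 1 \<ge> 0" by simp
  then have "Hr * (c * Fr - 1) \<le> (1 - d) * (c * Fr - 1)" using assms(2) by (intro mult_right_mono)
  then have "Fr - 1 \<le> (1 - d) * (c * Fr - 1)" using assms(1) by (simp add: algebra_simps)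
  moreover have "(1 - d) * (c * Fr - 1) = Fr - 1 + d - (d * (Fr * (1 + d))) / 2"
    unfolding assms(6) by (simp add: field_simps)
  ultimately have "d * (Fr * (1 + d)) \<le> d * 2" by linarith
  then have "Fr * (1 + d) \<le> 2" using assms(5) by simp
  moreover have "Fr \<le> Fr * (1 + d)" using assms by simp
  ultimately show ?thesis by linarith
qed

lemma chain_bound:
  assumes eL: "\<And>z. z \<in> set_pmf e \<Longrightarrow> z \<le> L"
    and tail: "\<And>x j. measure_pmf.prob e {z. z > j} \<le> measure_pmf.prob (p x) {y. int y - int x > j}"
    and d: "0 < d" "d \<le> 1" and hD: "\<And>n. ennreal d \<le> emeasure (iid e (Suc n)) {xs. posd 0 xs}"
  shows "FF p i (ln (1 + d / 2)) n i \<le> 2"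
proof -
  define g where "g = ln (1 + d / 2)"
  have g0: "0 \<le> g" unfolding g_def using d by simp
  have eg: "exp g = 1 + d / 2" unfolding g_def using d by simp
  have H: "hh p i n i \<le> ennreal (1 - d)"
  proof (cases n)
    case 0 then show ?thesis by simp
  next
    case (Suc m)
    have "hh p i n i \<le> q e n (int i - int i)" by (rule hh_le_q[OF eL tail])
    then have h1: "hh p i n i \<le> q e n 0" by simp
    have c: "q e n 0 + emeasure (iid e n) {xs. posd 0 xs} = 1" by (rule q0_compl)
    have Dd: "ennreal d \<le> emeasure (iid e n) {xs. posd 0 xs}" using hD[of m] Suc by simp
    have qf: "q e n 0 = ennreal (enn2real (q e n 0))" using q_le1[of e n 0]
      by (simp add: ennreal_enn2real_if top_unique) (metis ennreal_one_neq_top top.extremum_unique)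
    have Df: "emeasure (iid e n) {xs. posd 0 xs} = ennreal (measure_pmf.prob (iid e n) {xs. posd 0 xs})"
      by (simp add: measure_pmf.emeasure_eq_measure)
    have "enn2real (q e n 0) + measure_pmf.prob (iid e n) {xs. posd 0 xs} = 1"
      using c unfolding Df by (subst (asm) qf) (simp flip: ennreal_plus)
    moreover have "d \<le> measure_pmf.prob (iid e n) {xs. posd 0 xs}"
      using Dd unfolding Df using d by (simp add: ennreal_le_iff)
    ultimately have "enn2real (q e n 0) \<le> 1 - d" by linarith
    then have "q e n 0 \<le> ennreal (1 - d)" by (subst qf) (rule ennreal_leI)
    then show ?thesis using h1 by (rule order_trans[rotated])
  qed
  define Fr where "Fr = enn2real (FF p i g n i)"
  define Hr where "Hr = enn2real (hh p i n i)"
  have Ff: "FF p i g n i = ennreal Fr"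
    unfolding Fr_def using FF_fin[of p i g n i] by (simp add: ennreal_enn2real_if top_unique) (metis ennreal_neq_top top.extremum_unique)
  have Hf: "hh p i n i = ennreal Hr"
    unfolding Hr_def using hh_le1[of p i n i] by (simp add: ennreal_enn2real_if top_unique) (metis ennreal_one_neq_top top.extremum_unique)
  have Fr1: "1 \<le> Fr" using FF_ge1[OF g0, of p i n i] unfolding Ff by simp
  have Hr0: "0 \<le> Hr" unfolding Hr_def by simp
  have HrD: "Hr \<le> 1 - d" using H d unfolding Hf by (simp add: ennreal_le_iff)
  have "FF p i g n i + hh p i n i \<le> 1 + hh p i n i * (ennreal (exp g) * FF p i g n i)"
    by (rule FF_key[OF g0])
  then have "ennreal (Fr + Hr) \<le> ennreal (1 + Hr * (exp g * Fr))"
    unfolding Ff Hf using Fr1 Hr0 by (simp add: ennreal_mult ennreal_plus)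
  then have "Fr + Hr \<le> 1 + Hr * (exp g * Fr)"
    using Fr1 Hr0 by (subst (asm) ennreal_le_iff) auto
  then have "Fr \<le> 2" using real_bound[OF _ HrD Hr0 Fr1 d(1) eg] by blast
  then show ?thesis unfolding g_def[symmetric] Ff using ennreal_leI[OF \<open>Fr \<le> 2\<close>] by simp
qed



lemma cnt_snoc: "cnt i (xs @ [x]) = cnt i xs + (if x = i then 1 else 0)"
  by (simp add: cnt_def)

lemma lt_bound:
  assumes g: "0 < g"
  shows "exp_ennreal g (local_time i \<omega>) \<le> (SUP n. ennreal (exp (g * real (cnt i (stake (Suc n) \<omega>)))))"
proof -
  define a where "a m = cnt i (stake m \<omega>)" for m
  have sums: "(\<Sum>k<m. (if \<omega> !! k = i then 1 else 0 :: ennreal)) = of_nat (a m)" for m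
    unfolding a_def by (induction m) (simp add: cnt_def, simp add: cnt_snoc stake_Suc del: stake.simps)
  have lt: "local_time i \<omega> = (SUP m. of_nat (a m))"
    unfolding local_time_def suminf_eq_SUP sums ..
  have am: "a m \<le> a (Suc m)" for m unfolding a_def by (simp add: stake_Suc cnt_snoc del: stake.simps)
  show ?thesis
  proof (cases "\<exists>B. \<forall>m. a m \<le> B")
    case True
    then obtain B where B: "\<And>m. a m \<le> B" by blast
    have fin: "finite (range a)" by (rule finite_subset[of _ "{..B}"]) (use B in auto)
    obtain m0 where m0eq: "a m0 = Max (range a)" using Max_in[OF fin] by auto
    have m0: "a m \<le> a m0" for m unfolding m0eq using fin by (intro Max_ge) auto
    have "(SUP m. (of_nat (a m) :: ennreal)) = of_nat (a m0)"
    proof (rule antisym)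
      show "(SUP m. (of_nat (a m) :: ennreal)) \<le> of_nat (a m0)" by (rule SUP_least) (simp add: m0)
      show "of_nat (a m0) \<le> (SUP m. (of_nat (a m) :: ennreal))" by (rule SUP_upper) simp
    qed
    then have "exp_ennreal g (local_time i \<omega>) = ennreal (exp (g * real (a m0)))"
      unfolding lt exp_ennreal_def by simp
    also have "\<dots> \<le> ennreal (exp (g * real (a (Suc m0))))"
      using am[of m0] g by (intro ennreal_leI) (simp add: mult_left_mono)
    also have "\<dots> \<le> (SUP n. ennreal (exp (g * real (cnt i (stake (Suc n) \<omega>)))))"
      unfolding a_def by (rule SUP_upper) simp
    finally show ?thesis .
  next
    case False
    have "(SUP n. ennreal (exp (g * real (cnt i (stake (Suc n) \<omega>))))) = \<top>"
    proof (rule ennreal_SUP_eq_top)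
      fix N :: nat
      from False obtain m where "\<not> a m \<le> nat \<lceil>real N / g\<rceil>" by blast
      then have m: "a m > nat \<lceil>real N / g\<rceil>" by simp
      have "real N / g \<le> real (a m)" using m by linarith
      then have "real N \<le> g * real (a m)" using g by (simp add: field_simps)
      also have "\<dots> \<le> g * real (a (Suc m))" using am[of m] g by (simp add: mult_left_mono)
      also have "\<dots> \<le> exp (g * real (a (Suc m)))" using exp_ge_add_one_self[of "g * real (a (Suc m))"] by linarith
      finally have "of_nat N \<le> ennreal (exp (g * real (cnt i (stake (Suc m) \<omega>))))"
        unfolding a_def by (simp add: ennreal_of_nat_eq_real_of_nat ennreal_leI)
      then show "\<exists>n\<in>UNIV. of_nat N \<le> ennreal (exp (g * real (cnt i (stake (Suc n) \<omega>))))" by blast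
    qed
    then show ?thesis by (metis top_greatest)
  qed
qed

lemma M_bound:
  assumes M: "markov_law p i M" and g: "0 < g" and F: "\<And>n. FF p i g n i \<le> 2"
  shows "(\<integral>\<^sup>+\<omega>. exp_ennreal g (local_time i \<omega>) \<partial>M) \<le> ennreal (2 * exp g)"
proof -
  have S: "sets M = sets (stream_space (count_space UNIV))" using M unfolding markov_law_def by auto
  have meas: "stake n \<in> M \<rightarrow>\<^sub>M count_space UNIV" for n
    using measurable_stake[of n] by (simp add: measurable_cong_sets[OF S refl])
  define f where "f n \<omega> = ennreal (exp (g * real (cnt i (stake (Suc n) \<omega>))))" for n \<omega>
  have fm: "f n \<in> borel_measurable M" for n
    unfolding f_def by (rule measurable_compose[OF meas[of "Suc n"]]) simp
  have inc: "incseq f"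
  proof (rule incseq_SucI, rule le_funI)
    fix n \<omega>
    show "f n \<omega> \<le> f (Suc n) \<omega>"
      unfolding f_def using g
      by (intro ennreal_leI) (simp add: stake_Suc[of "Suc n"] cnt_snoc mult_left_mono del: stake.simps)
  qed
  have each: "(\<integral>\<^sup>+\<omega>. f n \<omega> \<partial>M) \<le> ennreal (2 * exp g)" for n
  proof -
    have "(\<integral>\<^sup>+\<omega>. f n \<omega> \<partial>M) = (\<integral>\<^sup>+xs. ennreal (exp (g * real (cnt i xs))) \<partial>distr M (count_space UNIV) (stake (Suc n)))"
      unfolding f_def by (subst nn_integral_distr[OF meas]) simp_all
    also have "\<dots> = (\<integral>\<^sup>+xs. ennreal (exp (g * real (cnt i xs))) \<partial>cp p i n)"
      by (simp only: markov_distr[OF M])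
    also have "\<dots> = (\<integral>\<^sup>+xs. ennreal (exp g) * ennreal (exp (g * real (cnt i (tl xs)))) \<partial>cp p i n)"
    proof (rule nn_integral_cong_AE)
      show "AE xs in measure_pmf (cp p i n). ennreal (exp (g * real (cnt i xs))) = ennreal (exp g) * ennreal (exp (g * real (cnt i (tl xs))))"
        unfolding AE_measure_pmf_iff
      proof
        fix xs assume "xs \<in> set_pmf (cp p i n)"
        then obtain ys where xs: "xs = i # ys" using cp_set[of xs p i n] by (cases xs) auto
        show "ennreal (exp (g * real (cnt i xs))) = ennreal (exp g) * ennreal (exp (g * real (cnt i (tl xs))))"
          unfolding xs by (simp add: cnt_def ennreal_mult[symmetric] exp_add[symmetric] algebra_simps)
      qed
    qed
    also have "\<dots> = ennreal (exp g) * FF p i g n i"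
      by (simp add: nn_integral_cmult FF_cp)
    also have "\<dots> \<le> ennreal (exp g) * 2" using F[of n] by (intro mult_left_mono) auto
    also have "\<dots> = ennreal (2 * exp g)" by (simp add: ennreal_mult mult.commute)
    finally show ?thesis .
  qed
  have "(\<integral>\<^sup>+\<omega>. exp_ennreal g (local_time i \<omega>) \<partial>M) \<le> (\<integral>\<^sup>+\<omega>. (SUP n. f n \<omega>) \<partial>M)"
    unfolding f_def by (intro nn_integral_mono lt_bound g)
  also have "\<dots> = (SUP n. \<integral>\<^sup>+\<omega>. f n \<omega> \<partial>M)"
    using nn_integral_monotone_convergence_SUP[OF inc fm] by (simp add: SUP_apply)
  also have "\<dots> \<le> ennreal (2 * exp g)" by (intro SUP_least each)
  finally show ?thesis .
qed



lemma make_e0: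
  fixes N :: "'a measure" and \<eta> :: "'a \<Rightarrow> int"
  assumes PN: "prob_space N" and m: "\<eta> \<in> N \<rightarrow>\<^sub>M count_space UNIV"
  shows "\<exists>e0::int pmf. measure_pmf e0 = distr N (count_space UNIV) \<eta>"
proof -
  define D where "D = distr N (count_space UNIV) \<eta>"
  have PD: "prob_space D" unfolding D_def using prob_space.prob_space_distr[OF PN m] .
  interpret PD': prob_space D by (rule PD)
  have sD: "sets D = UNIV" unfolding D_def by simp
  have "(\<integral>\<^sup>+j. ennreal (measure D {j}) \<partial>count_space UNIV) = (\<integral>\<^sup>+j. emeasure D {j} \<partial>count_space UNIV)"
    by (intro nn_integral_cong) (simp add: PD'.emeasure_eq_measure)
  also have "\<dots> = emeasure D UNIV"
    by (rule emeasure_countable_singleton[symmetric]) (auto simp: sD)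
  also have "\<dots> = 1" using prob_space.emeasure_space_1[OF PD] by (simp add: D_def)
  finally have int1: "(\<integral>\<^sup>+j. ennreal (measure D {j}) \<partial>count_space UNIV) = 1" .
  define e0 where "e0 = embed_pmf (\<lambda>j. measure D {j})"
  have pe: "pmf e0 j = measure D {j}" for j
    unfolding e0_def by (rule pmf_embed_pmf) (simp_all add: int1)
  have "measure_pmf e0 = D"
  proof (rule measure_eqI_countable[where A = UNIV])
    fix j :: int
    show "emeasure (measure_pmf e0) {j} = emeasure D {j}"
      by (simp add: emeasure_pmf_single pe PD'.emeasure_eq_measure)
  qed (auto simp: sD)
  then show ?thesis unfolding D_def by blast
qed

lemma sup_min: "(SUP K::nat. ennreal (of_int (min z (int K)))) = ennreal (of_int z)"
proof (rule antisym)
  show "(SUP K::nat. ennreal (of_int (min z (int K)))) \<le> ennreal (of_int z)"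
    by (rule SUP_least) (intro ennreal_leI, simp)
  have "ennreal (of_int z) = ennreal (of_int (min z (int (nat z))))"
    by (cases "z \<ge> 0") (auto simp: ennreal_neg)
  also have "\<dots> \<le> (SUP K::nat. ennreal (of_int (min z (int K))))" by (rule SUP_upper) simp
  finally show "ennreal (of_int z) \<le> (SUP K::nat. ennreal (of_int (min z (int K))))" .
qed



theorem proposition4:
  fixes p :: "nat \<Rightarrow> nat pmf" and N :: "'a measure" and \<eta> :: "'a \<Rightarrow> int"
  assumes "prob_space N"
    and "\<eta> \<in> N \<rightarrow>\<^sub>M count_space UNIV"
    and "(\<integral>\<^sup>+\<omega>. ennreal (real_of_int (- \<eta> \<omega>)) \<partial>N) < \<infinity>"
    and "(\<integral>\<^sup>+\<omega>. ennreal (real_of_int (- \<eta> \<omega>)) \<partial>N) < (\<integral>\<^sup>+\<omega>. ennreal (real_of_int (\<eta> \<omega>)) \<partial>N)"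
    and "\<And>i j. measure N {\<omega> \<in> space N. \<eta> \<omega> > j}
                 \<le> measure_pmf.prob (p i) {k. int k - int i > j}"
  shows "\<exists>\<gamma>>0. \<exists>C::real. \<forall>i M. markov_law p i M \<longrightarrow>
           (\<integral>\<^sup>+\<omega>. exp_ennreal \<gamma> (local_time i \<omega>) \<partial>M) \<le> ennreal C"
proof -
  obtain e0 :: "int pmf" where e0: "measure_pmf e0 = distr N (count_space UNIV) \<eta>"
    using make_e0[OF assms(1,2)] by blast
  have int_e0: "(\<integral>\<^sup>+z. f z \<partial>e0) = (\<integral>\<^sup>+\<omega>. f (\<eta> \<omega>) \<partial>N)" for f :: "int \<Rightarrow> ennreal"
    unfolding e0 by (rule nn_integral_distr[OF assms(2)]) simp
  have prob_e0: "measure_pmf.prob e0 A = measure N {\<omega> \<in> space N. \<eta> \<omega> \<in> A}" for A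
    unfolding e0 by (subst measure_distr[OF assms(2)]) (auto intro!: arg_cong[where f="measure N"])
  define mm where "mm = (\<integral>\<^sup>+\<omega>. ennreal (real_of_int (- \<eta> \<omega>)) \<partial>N)"
  define mp where "mp = (\<integral>\<^sup>+\<omega>. ennreal (real_of_int (\<eta> \<omega>)) \<partial>N)"
  have "mp = (\<integral>\<^sup>+\<omega>. (SUP K::nat. ennreal (of_int (min (\<eta> \<omega>) (int K)))) \<partial>N)"
    unfolding mp_def sup_min ..
  also have "\<dots> = (SUP K::nat. \<integral>\<^sup>+\<omega>. ennreal (of_int (min (\<eta> \<omega>) (int K))) \<partial>N)"
  proof (rule nn_integral_monotone_convergence_SUP)
    show "incseq (\<lambda>K \<omega>. ennreal (real_of_int (min (\<eta> \<omega>) (int K))))"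
      by (auto simp: incseq_def le_fun_def intro!: ennreal_leI)
    show "(\<lambda>\<omega>. ennreal (real_of_int (min (\<eta> \<omega>) (int K)))) \<in> borel_measurable N" for K
      by (rule measurable_compose[OF assms(2)]) simp
  qed
  finally have mpS: "mp = (SUP K::nat. \<integral>\<^sup>+\<omega>. ennreal (of_int (min (\<eta> \<omega>) (int K))) \<partial>N)" .
  obtain K :: nat where K: "mm < (\<integral>\<^sup>+\<omega>. ennreal (of_int (min (\<eta> \<omega>) (int K))) \<partial>N)"
    using assms(4) unfolding mm_def[symmetric] mp_def[symmetric] mpS by (auto simp: less_SUP_iff)
  define L where "L = int K + 1"
  have L0: "0 < L" unfolding L_def by simp
  define e where "e = map_pmf (\<lambda>z. min z L) e0"
  have eL: "\<And>z. z \<in> set_pmf e \<Longrightarrow> z \<le> L" unfolding e_def by auto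
  have mpe: "mm < (\<integral>\<^sup>+z. ennreal (of_int z) \<partial>e)"
  proof -
    have "(\<integral>\<^sup>+\<omega>. ennreal (of_int (min (\<eta> \<omega>) (int K))) \<partial>N) \<le> (\<integral>\<^sup>+\<omega>. ennreal (of_int (min (\<eta> \<omega>) L)) \<partial>N)"
      unfolding L_def by (intro nn_integral_mono ennreal_leI) simp
    also have "\<dots> = (\<integral>\<^sup>+z. ennreal (of_int z) \<partial>e)"
      unfolding e_def by (simp add: int_e0)
    finally show ?thesis using K by simp
  qed
  have mme: "(\<integral>\<^sup>+z. ennreal (of_int (- z)) \<partial>e) = mm"
  proof -
    have "(\<integral>\<^sup>+z. ennreal (of_int (- z)) \<partial>e) = (\<integral>\<^sup>+\<omega>. ennreal (of_int (- min (\<eta> \<omega>) L)) \<partial>N)"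
      unfolding e_def by (simp add: int_e0)
    also have "\<dots> = mm" unfolding mm_def
      by (intro nn_integral_cong) (use L0 in \<open>auto simp: min_def ennreal_neg\<close>)
    finally show ?thesis .
  qed
  have mpe_fin: "(\<integral>\<^sup>+z. ennreal (of_int z) \<partial>e) \<le> ennreal (of_int L)"
  proof -
    have "(\<integral>\<^sup>+z. ennreal (of_int z) \<partial>e) \<le> (\<integral>\<^sup>+z. ennreal (of_int L) \<partial>e)"
      by (intro nn_integral_mono_AE) (auto simp: AE_measure_pmf_iff intro!: ennreal_leI dest: eL)
    then show ?thesis by (simp add: measure_pmf.emeasure_space_1)
  qed
  define Ap where "Ap = enn2real (\<integral>\<^sup>+z. ennreal (of_int z) \<partial>e)"
  define Am where "Am = enn2real mm"
  have Apf: "(\<integral>\<^sup>+z. ennreal (of_int z) \<partial>e) = ennreal Ap"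
    unfolding Ap_def using mpe_fin by (simp add: ennreal_enn2real_if) (metis ennreal_neq_top top.extremum_unique)
  have Amf: "mm = ennreal Am"
    unfolding Am_def using assms(3) unfolding mm_def[symmetric] by (simp add: ennreal_enn2real_if)
  have Ap0: "0 \<le> Ap" "0 \<le> Am" unfolding Ap_def Am_def by simp_all
  have AmAp: "Am < Ap" using mpe unfolding Apf Amf using Ap0 by (simp add: ennreal_less_iff)
  define d where "d = min ((Ap - Am) / real_of_int L) 1"
  have d0: "0 < d" unfolding d_def using AmAp L0 by simp
  have d1: "d \<le> 1" unfolding d_def by simp
  have hD: "ennreal d \<le> emeasure (iid e (Suc n)) {xs. posd 0 xs}" for n
  proof -
    define Dr where "Dr = measure_pmf.prob (iid e (Suc n)) {xs. posd 0 xs}"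
    have Df: "emeasure (iid e (Suc n)) {xs. posd 0 xs} = ennreal Dr"
      unfolding Dr_def by (simp add: measure_pmf.emeasure_eq_measure)
    have Dr0: "0 \<le> Dr" unfolding Dr_def by simp
    have "ennreal Ap \<le> ennreal (of_int L) * ennreal Dr + ennreal Am"
      using walk_bound[where e = e and L = L and n = n, OF eL L0] unfolding Apf mme Amf Df .
    also have "\<dots> = ennreal (of_int L * Dr + Am)"
      using L0 Dr0 Ap0 by (simp add: ennreal_mult ennreal_plus)
    finally have "Ap \<le> of_int L * Dr + Am"
      using L0 Dr0 Ap0 by (subst (asm) ennreal_le_iff) auto
    then have "(Ap - Am) / real_of_int L \<le> Dr" using L0 by (simp add: divide_le_eq algebra_simps)
    then have "d \<le> Dr" unfolding d_def by linarith
    then show ?thesis unfolding Df by (rule ennreal_leI)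
  qed
  have tail: "measure_pmf.prob e {z. z > j} \<le> measure_pmf.prob (p x) {y. int y - int x > j}" for x j
  proof -
    have "measure_pmf.prob e {z. z > j} = measure_pmf.prob e0 {z. min z L > j}"
      unfolding e_def by (simp add: vimage_def)
    also have "\<dots> \<le> measure_pmf.prob e0 {z. z > j}"
      by (intro measure_pmf.finite_measure_mono) auto
    also have "\<dots> = measure N {\<omega> \<in> space N. \<eta> \<omega> > j}" by (simp add: prob_e0)
    also have "\<dots> \<le> measure_pmf.prob (p x) {y. int y - int x > j}" by (rule assms(5))
    finally show ?thesis .
  qed
  define g where "g = ln (1 + d / 2)"
  have g0: "0 < g" unfolding g_def using d0 by simp
  have FFb: "FF p i g n i \<le> 2" for i n
    unfolding g_def by (rule chain_bound[OF eL tail d0 d1 hD])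
  have "\<forall>i M. markov_law p i M \<longrightarrow> (\<integral>\<^sup>+\<omega>. exp_ennreal g (local_time i \<omega>) \<partial>M) \<le> ennreal (2 * exp g)"
    using M_bound[OF _ g0 FFb] by blast
  then show ?thesis using g0 by blast
qed

end
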